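(* If $m,n,s,t$ are positive integers, then the direct product ${\sf M}_m(C_{2s+1})\times {\sf M}_n(C_{2t+1})$ is not a cover graph.
   Context: $C_k$ is the cycle on $k$ vertices. A graph is a cover graph if it is the underlying (undirected) graph of the Hasse diagram of some finite partially ordered set. The direct product $G \times H$ has vertex set $V(G)\times V(H)$, with $(g_i,h_s)$ adjacent to $(g_j,h_t)$ if and only if $g_ig_j \in E(G)$ and $h_sh_t \in E(H)$. For a graph $G$ with vertex set $V_0=\{\langle 0,j\rangle : 0\le j\le n-1\}$ and edge set $E_0$, and $m>0$, the generalized Mycielskian ${\sf M}_m(G)$ has vertex set $V_0\cup V_1\cup\cdots\cup V_m\cup\{u\}$ where $V_i=\{\langle i,j\rangle: 0\le j\le n-1\}$, and edge set $E_0\cup E_1\cup\cdots\cup E_m\cup\{\langle m,j\rangle u: 0\le j\le n-1\}$, where $E_i=\{\langle i-1,j\rangle\langle i,k\rangle : \langle 0,j\rangle\langle 0,k\rangle\in E_0\}$ for $1\le i\le m$. *)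

theory Defs
  imports Main
begin

text \<open>A (simple, undirected) graph is a vertex set together with an adjacency
predicate; all our constructions give symmetric, irreflexive adjacency
relations that only relate vertices of the vertex set.\<close>

type_synonym 'a graph = "'a set \<times> ('a \<Rightarrow> 'a \<Rightarrow> bool)"

definition verts :: "'a graph \<Rightarrow> 'a set" where "verts G = fst G"
definition adj :: "'a graph \<Rightarrow> 'a \<Rightarrow> 'a \<Rightarrow> bool" where "adj G = snd G"

text \<open>The cycle C_k on vertices 0,...,k-1 (meant for k >= 3).\<close>
definition cycle_graph :: "nat \<Rightarrow> nat graph" where
  "cycle_graph k = ({0..<k},
     (\<lambda>i j. i < k \<and> j < k \<and> (j = (i + 1) mod k \<or> i = (j + 1) mod k)))"

definition direct_product :: "'a graph \<Rightarrow> 'b graph \<Rightarrow> ('a \<times> 'b) graph" where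
  "direct_product G H = (verts G \<times> verts H,
     (\<lambda>(g, h) (g', h'). g \<in> verts G \<and> g' \<in> verts G \<and> h \<in> verts H \<and> h' \<in> verts H \<and>
        adj G g g' \<and> adj H h h'))"

text \<open>Generalized Mycielskian M_m(G): vertex \<langle>i,v\<rangle> is Some (i, v) with i \<le> m,
  v a vertex of G; the apex u is None.\<close>
definition myc_adj :: "nat \<Rightarrow> 'a graph \<Rightarrow> (nat \<times> 'a) option \<Rightarrow> (nat \<times> 'a) option \<Rightarrow> bool" where
  "myc_adj m G x y =
     (case (x, y) of
        (Some (i, a), Some (j, b)) \<Rightarrow>
           i \<le> m \<and> j \<le> m \<and> a \<in> verts G \<and> b \<in> verts G \<and> adj G a b \<and>
           ((i = 0 \<and> j = 0) \<or> j = i + 1 \<or> i = j + 1)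
      | (Some (i, a), None) \<Rightarrow> i = m \<and> a \<in> verts G
      | (None, Some (j, b)) \<Rightarrow> j = m \<and> b \<in> verts G
      | (None, None) \<Rightarrow> False)"

definition mycielskian :: "nat \<Rightarrow> 'a graph \<Rightarrow> (nat \<times> 'a) option graph" where
  "mycielskian m G = (insert None (Some ` ({0..m} \<times> verts G)), myc_adj m G)"

definition covers :: "'a set \<Rightarrow> 'a rel \<Rightarrow> 'a \<Rightarrow> 'a \<Rightarrow> bool" where
  "covers V r x y \<longleftrightarrow> (x, y) \<in> r \<and> x \<noteq> y \<and>
      \<not> (\<exists>z\<in>V. z \<noteq> x \<and> z \<noteq> y \<and> (x, z) \<in> r \<and> (z, y) \<in> r)"

definition is_cover_graph :: "'a graph \<Rightarrow> bool" where
  "is_cover_graph G \<longleftrightarrow> finite (verts G) \<and>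
     (\<exists>r. partial_order_on (verts G) r \<and>
        (\<forall>x\<in>verts G. \<forall>y\<in>verts G. adj G x y \<longleftrightarrow> (covers (verts G) r x y \<or> covers (verts G) r y x)))"

end

theory Submission
  imports Defs
begin


definition walk :: "'a graph \<Rightarrow> 'a list \<Rightarrow> bool" where
  "walk G xs = successively (adj G) xs"

definition pstep :: "'a graph \<Rightarrow> 'a list \<Rightarrow> 'a list \<Rightarrow> bool" where
  "pstep G xs ys \<longleftrightarrow> (\<exists>pre x y y' z post. xs = pre @ x # y # z # post \<and>
      ys = pre @ x # y' # z # post \<and> adj G x y' \<and> adj G y' z)"

definition sig :: "'a rel \<Rightarrow> 'a \<Rightarrow> 'a \<Rightarrow> int" where
  "sig r a b = (if (a, b) \<in> r then 1 else -1)"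

fun phi :: "'a rel \<Rightarrow> 'a list \<Rightarrow> int" where
  "phi r (x # y # xs) = sig r x y + phi r (y # xs)"
| "phi r _ = 0"

lemma phi_append: "phi r (xs @ y # ys) = phi r (xs @ [y]) + phi r (y # ys)"
  by (induction xs rule: induct_list012) auto

lemma walk_Cons2: "walk G (x # y # xs) \<longleftrightarrow> adj G x y \<and> walk G (y # xs)"
  by (simp add: walk_def)

lemma walk_append_iff: "walk G (xs @ ys) \<longleftrightarrow> walk G xs \<and> walk G ys \<and>
     (xs = [] \<or> ys = [] \<or> adj G (last xs) (hd ys))"
  by (simp add: walk_def successively_append_iff)

lemma pstep_walk: "pstep G xs ys \<Longrightarrow> walk G xs \<Longrightarrow> walk G ys"
  unfolding pstep_def by (auto simp: walk_append_iff walk_Cons2)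

lemma pstep_len: "pstep G xs ys \<Longrightarrow> length ys = length xs"
  unfolding pstep_def by auto

lemma pstep_sym: "pstep G xs ys \<Longrightarrow> walk G xs \<Longrightarrow> pstep G ys xs"
  unfolding pstep_def
  apply clarify
  subgoal for pre x y y' z post
    apply (rule exI[of _ pre], rule exI[of _ x], rule exI[of _ y'], rule exI[of _ y],
           rule exI[of _ z], rule exI[of _ post])
    by (auto simp: walk_append_iff walk_Cons2)
  done

lemma pstepr_walk: "(pstep G)\<^sup>*\<^sup>* xs ys \<Longrightarrow> walk G xs \<Longrightarrow> walk G ys"
  by (induction rule: rtranclp_induct) (auto intro: pstep_walk)

lemma pstepr_len: "(pstep G)\<^sup>*\<^sup>* xs ys \<Longrightarrow> length ys = length xs"
  by (induction rule: rtranclp_induct) (auto dest: pstep_len)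

lemma pstepr_sym: "(pstep G)\<^sup>*\<^sup>* xs ys \<Longrightarrow> walk G xs \<Longrightarrow> (pstep G)\<^sup>*\<^sup>* ys xs"
proof (induction rule: rtranclp_induct)
  case base then show ?case by simp
next
  case (step y z)
  have "walk G y" using step pstepr_walk by blast
  then have "pstep G z y" using step pstep_sym by blast
  then show ?case using step by (meson converse_rtranclp_into_rtranclp)
qed

lemma pstep_ctx: "pstep G xs ys \<Longrightarrow> pstep G (A @ xs @ B) (A @ ys @ B)"
  unfolding pstep_def by (metis append.assoc append_Cons)

lemma pstepr_ctx: "(pstep G)\<^sup>*\<^sup>* xs ys \<Longrightarrow> (pstep G)\<^sup>*\<^sup>* (A @ xs @ B) (A @ ys @ B)"
  by (induction rule: rtranclp_induct) (auto intro: pstep_ctx rtranclp.rtrancl_into_rtrancl)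

lemma pstepr_Cons: "(pstep G)\<^sup>*\<^sup>* xs ys \<Longrightarrow> (pstep G)\<^sup>*\<^sup>* (a # xs) (a # ys)"
  using pstepr_ctx[of G xs ys "[a]" "[]"] by simp

lemma pstepr_app1: "(pstep G)\<^sup>*\<^sup>* xs ys \<Longrightarrow> (pstep G)\<^sup>*\<^sup>* (xs @ B) (ys @ B)"
  using pstepr_ctx[of G xs ys "[]" B] by simp

lemma pstepr_app2: "(pstep G)\<^sup>*\<^sup>* xs ys \<Longrightarrow> (pstep G)\<^sup>*\<^sup>* (A @ xs) (A @ ys)"
  using pstepr_ctx[of G xs ys A "[]"] by simp

lemma pstep_rev: "(\<And>a b. adj G a b \<Longrightarrow> adj G b a) \<Longrightarrow> pstep G xs ys \<Longrightarrow> pstep G (rev xs) (rev ys)"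
  unfolding pstep_def
  apply clarify
  subgoal for pre x y y' z post
    apply (rule exI[of _ "rev post"], rule exI[of _ z], rule exI[of _ y], rule exI[of _ y'],
           rule exI[of _ x], rule exI[of _ "rev pre"])
    by auto
  done

lemma pstepr_rev: assumes "\<And>a b. adj G a b \<Longrightarrow> adj G b a" "(pstep G)\<^sup>*\<^sup>* xs ys"
  shows "(pstep G)\<^sup>*\<^sup>* (rev xs) (rev ys)"
  using assms(2)
proof (induction rule: rtranclp_induct)
  case base then show ?case by simp
next
  case (step y z) then show ?case using pstep_rev[of G y z] assms(1) by (meson rtranclp.rtrancl_into_rtrancl)
qed



locale cov =
  fixes K :: "'a graph" and r :: "'a rel"
  assumes po: "partial_order_on (verts K) r"
    and cov: "\<And>x y. x \<in> verts K \<Longrightarrow> y \<in> verts K \<Longrightarrow> adj K x y \<longleftrightarrow> covers (verts K) r x y \<or> covers (verts K) r y x"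
    and mem: "\<And>a b. adj K a b \<Longrightarrow> a \<in> verts K \<and> b \<in> verts K"
begin

lemma tr: "trans r" and anti: "antisym r"
  using po by (auto simp: partial_order_on_def preorder_on_def)

lemma adj_or: assumes "adj K a b" shows "a \<noteq> b" "(a, b) \<in> r \<longleftrightarrow> (b, a) \<notin> r"
proof -
  have "covers (verts K) r a b \<or> covers (verts K) r b a" using assms mem cov by blast
  then show "a \<noteq> b" "(a, b) \<in> r \<longleftrightarrow> (b, a) \<notin> r"
    using anti unfolding covers_def antisym_def by blast+
qed

lemma adj_sym: "adj K a b \<Longrightarrow> adj K b a"
  using mem cov by blast

lemma adj_sig: "adj K a b \<Longrightarrow> sig r b a = - sig r a b"
  using adj_or[of a b] by (auto simp: sig_def)

lemma chainUp:
  assumes xz: "(x, z) \<in> r" "x \<noteq> z" and a1: "adj K x y'" and a2: "adj K y' z"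
  shows "(x, y') \<in> r \<and> (y', z) \<in> r"
proof -
  have V: "x \<in> verts K" "y' \<in> verts K" "z \<in> verts K" using mem a1 a2 by auto
  have c1: "covers (verts K) r x y' \<or> covers (verts K) r y' x" using cov V a1 by blast
  have c2: "covers (verts K) r y' z \<or> covers (verts K) r z y'" using cov V a2 by blast
  show ?thesis
  proof (cases "covers (verts K) r x y'")
    case True
    show ?thesis
    proof (cases "covers (verts K) r y' z")
      case True then show ?thesis using \<open>covers (verts K) r x y'\<close> unfolding covers_def by blast
    next
      case False
      then have "covers (verts K) r z y'" using c2 by blast
      then have "z \<in> verts K \<and> z \<noteq> x \<and> z \<noteq> y' \<and> (x, z) \<in> r \<and> (z, y') \<in> r"
        using xz V unfolding covers_def by blast
      then show ?thesis using \<open>covers (verts K) r x y'\<close> unfolding covers_def by blast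
    qed
  next
    case False
    then have cy: "covers (verts K) r y' x" using c1 by blast
    show ?thesis
    proof (cases "covers (verts K) r y' z")
      case True
      have "x \<in> verts K \<and> x \<noteq> y' \<and> x \<noteq> z \<and> (y', x) \<in> r \<and> (x, z) \<in> r"
        using cy xz V unfolding covers_def by blast
      then show ?thesis using True unfolding covers_def by blast
    next
      case False
      then have "covers (verts K) r z y'" using c2 by blast
      then have "(z, x) \<in> r" using cy tr unfolding covers_def trans_def by blast
      then show ?thesis using xz anti unfolding antisym_def by blast
    qed
  qed
qed

lemma square:
  assumes a: "adj K x y" "adj K y z" "adj K x y'" "adj K y' z"
  shows "sig r x y + sig r y z = sig r x y' + sig r y' z"
proof (cases "x = z")
  case True
  then show ?thesis using adj_sig[of y z] adj_sig[of y' z] assms by simp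
next
  case False
  have up: "(x, y2) \<in> r \<and> (y2, z) \<in> r" if "(x, y1) \<in> r" "(y1, z) \<in> r" "adj K x y2" "adj K y2 z" for y1 y2
  proof -
    have "(x, z) \<in> r" using that tr unfolding trans_def by blast
    then show ?thesis using chainUp[of x z y2] that False by blast
  qed
  have dn: "(z, y2) \<in> r \<and> (y2, x) \<in> r" if "(z, y1) \<in> r" "(y1, x) \<in> r" "adj K x y2" "adj K y2 z" for y1 y2
  proof -
    have s: "adj K z y2" "adj K y2 x" using that adj_sym by blast+
    have "(z, x) \<in> r" using that tr unfolding trans_def by blast
    then show ?thesis using chainUp[of z x y2] s False by blast
  qed
  have o1: "(x, y) \<in> r \<longleftrightarrow> (y, x) \<notin> r" using adj_or a by blast
  have o2: "(y, z) \<in> r \<longleftrightarrow> (z, y) \<notin> r" using adj_or a by blast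
  have o3: "(x, y') \<in> r \<longleftrightarrow> (y', x) \<notin> r" using adj_or a by blast
  have o4: "(y', z) \<in> r \<longleftrightarrow> (z, y') \<notin> r" using adj_or a by blast
  have u1: "(x, y) \<in> r \<and> (y, z) \<in> r \<longleftrightarrow> (x, y') \<in> r \<and> (y', z) \<in> r"
    using up[of y y'] up[of y' y] a by blast
  have d1: "(z, y) \<in> r \<and> (y, x) \<in> r \<longleftrightarrow> (z, y') \<in> r \<and> (y', x) \<in> r"
    using dn[of y y'] dn[of y' y] a by blast
  show ?thesis
    unfolding sig_def using u1 d1 o1 o2 o3 o4
    by (cases "(x, y) \<in> r"; cases "(y, z) \<in> r"; cases "(x, y') \<in> r"; cases "(y', z) \<in> r") auto
qed

lemma phi_pstep: "walk K xs \<Longrightarrow> pstep K xs ys \<Longrightarrow> phi r ys = phi r xs"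
  unfolding pstep_def
proof clarify
  fix pre x y y' z post
  assume w: "walk K (pre @ x # y # z # post)" and a: "adj K x y'" "adj K y' z"
  then have "adj K x y" "adj K y z" by (auto simp: walk_append_iff walk_Cons2)
  then have sq: "sig r x y + sig r y z = sig r x y' + sig r y' z" using square a by blast
  show "phi r (pre @ x # y' # z # post) = phi r (pre @ x # y # z # post)"
    using phi_append[of r pre x "y' # z # post"] phi_append[of r pre x "y # z # post"] sq by simp
qed

lemma phir_pstep: "(pstep K)\<^sup>*\<^sup>* xs ys \<Longrightarrow> walk K xs \<Longrightarrow> phi r ys = phi r xs"
proof (induction rule: rtranclp_induct)
  case base then show ?case by simp
next
  case (step y z) then show ?case using phi_pstep pstepr_walk by metis
qed

lemma phi_rev: "walk K xs \<Longrightarrow> phi r (rev xs) = - phi r xs"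
proof (induction xs rule: induct_list012)
  case (3 x y zs)
  have "phi r (rev (x # y # zs)) = phi r (rev (y # zs) @ [x])" by simp
  also have "\<dots> = phi r ((rev zs @ [y]) @ x # [])" by simp
  also have "\<dots> = phi r (rev zs @ [y]) + sig r y x" using phi_append[of r "rev zs" y "[x]"] by simp
  also have "\<dots> = - phi r (y # zs) - sig r x y"
    using 3 adj_sig[of x y] by (simp add: walk_Cons2)
  finally show ?case by simp
qed auto

lemma phi_parity: "xs \<noteq> [] \<Longrightarrow> even (phi r xs) \<longleftrightarrow> odd (length xs)"
proof (induction xs rule: induct_list012)
  case (3 x y zs)
  have "odd (sig r x y)" by (simp add: sig_def)
  then show ?case using 3 by simp
qed auto

lemma no_rev:
  assumes "walk K xs" "xs \<noteq> []" "even (length xs)" "(pstep K)\<^sup>*\<^sup>* xs (rev xs)"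
  shows False
proof -
  have "phi r (rev xs) = phi r xs" using phir_pstep[OF assms(4) assms(1)] .
  then have "phi r xs = 0" using phi_rev[OF assms(1)] by simp
  then show False using phi_parity[of xs] assms by simp
qed

end

lemma cover_no_rev:
  assumes "is_cover_graph K" "\<And>a b. adj K a b \<Longrightarrow> a \<in> verts K \<and> b \<in> verts K"
    "walk K xs" "xs \<noteq> []" "even (length xs)" "(pstep K)\<^sup>*\<^sup>* xs (rev xs)"
  shows False
proof -
  obtain r where r1: "partial_order_on (verts K) r" and
     r2: "\<forall>x\<in>verts K. \<forall>y\<in>verts K. adj K x y \<longleftrightarrow> (covers (verts K) r x y \<or> covers (verts K) r y x)"
    using assms(1) unfolding is_cover_graph_def by blast
  have "cov K r"
  proof
    show "partial_order_on (verts K) r" by (rule r1)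
    show "\<And>x y. x \<in> verts K \<Longrightarrow> y \<in> verts K \<Longrightarrow> adj K x y = (covers (verts K) r x y \<or> covers (verts K) r y x)"
      using r2 by blast
    show "\<And>a b. adj K a b \<Longrightarrow> a \<in> verts K \<and> b \<in> verts K" by (rule assms(2))
  qed
  then show False using cov.no_rev[OF _ assms(3-6)] by blast
qed



lemma adj_dp: "adj (direct_product G H) (g, h) (g', h') \<longleftrightarrow>
   g \<in> verts G \<and> g' \<in> verts G \<and> h \<in> verts H \<and> h' \<in> verts H \<and> adj G g g' \<and> adj H h h'"
  by (simp add: direct_product_def adj_def verts_def)

lemma verts_dp: "verts (direct_product G H) = verts G \<times> verts H"
  by (simp add: direct_product_def verts_def)

definition memg :: "'a graph \<Rightarrow> bool" where
  "memg G \<longleftrightarrow> (\<forall>a b. adj G a b \<longrightarrow> a \<in> verts G \<and> b \<in> verts G)"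

lemma memg_dp: "memg (direct_product G H)"
  unfolding memg_def by (auto simp: adj_dp verts_dp)

lemma walk_zip: "memg G \<Longrightarrow> memg H \<Longrightarrow> walk G xs \<Longrightarrow> walk H zs \<Longrightarrow> length xs = length zs \<Longrightarrow>
   walk (direct_product G H) (zip xs zs)"
proof (induction xs arbitrary: zs rule: induct_list012)
  case 1 then show ?case by (simp add: walk_def)
next
  case (2 x) then show ?case by (cases zs) (auto simp: walk_def)
next
  case (3 x y xs)
  then obtain a b zs' where zs: "zs = a # b # zs'" by (metis length_Suc_conv)
  have "walk (direct_product G H) (zip (y # xs) (b # zs'))"
    using "3.IH"(2)[of "b # zs'"] 3(3-7) zs by (simp add: walk_Cons2)
  moreover have "adj (direct_product G H) (x, a) (y, b)"
    using 3(3,4,5,6) zs unfolding memg_def by (auto simp: walk_Cons2 adj_dp)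
  ultimately show ?case using zs by (simp add: walk_Cons2)
qed

lemma len3: "length xs = Suc (Suc (Suc n)) \<Longrightarrow> \<exists>a b c r. xs = a # b # c # r \<and> length r = n"
  by (metis length_Suc_conv)

lemma split3:
  assumes "length zs = length (pre @ x # y # z # post)"
  obtains a b c rest where "zs = take (length pre) zs @ a # b # c # rest" "length rest = length post"
proof -
  have "length (drop (length pre) zs) = Suc (Suc (Suc (length post)))" using assms by simp
  then have "\<exists>a b c rest. drop (length pre) zs = a # b # c # rest \<and> length rest = length post"
    by (rule len3)
  then obtain a b c rest where d: "drop (length pre) zs = a # b # c # rest" "length rest = length post"
    by blast
  then show ?thesis using that by (metis append_take_drop_id)
qed

lemma zip_pstep1:
  assumes "pstep G xs ys" "walk H zs" "length zs = length xs" "memg G" "memg H"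
  shows "pstep (direct_product G H) (zip xs zs) (zip ys zs)"
proof -
  obtain pre x y y' z post where xs: "xs = pre @ x # y # z # post" and ys: "ys = pre @ x # y' # z # post"
    and a: "adj G x y'" "adj G y' z"
    using assms(1) unfolding pstep_def by blast
  obtain a b c rest where zs: "zs = take (length pre) zs @ a # b # c # rest" and lr: "length rest = length post"
    using split3 assms(3) xs by metis
  have w: "adj H a b" "adj H b c" using assms(2) zs by (metis walk_append_iff walk_Cons2)+
  have lp: "length (take (length pre) zs) = length pre" using assms(3) xs by simp
  have e1: "zip xs zs = zip pre (take (length pre) zs) @ (x, a) # (y, b) # (z, c) # zip post rest"
    using lp xs by (subst zs) (simp)
  have e2: "zip ys zs = zip pre (take (length pre) zs) @ (x, a) # (y', b) # (z, c) # zip post rest"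
    using lp ys by (subst zs) (simp)
  have "adj (direct_product G H) (x, a) (y', b)" "adj (direct_product G H) (y', b) (z, c)"
    using a w assms(4,5) unfolding memg_def by (auto simp: adj_dp)
  then show ?thesis unfolding pstep_def e1 e2 by blast
qed

lemma zip_pstep2:
  assumes "pstep H zs zs'" "walk G xs" "length zs = length xs" "memg G" "memg H"
  shows "pstep (direct_product G H) (zip xs zs) (zip xs zs')"
proof -
  obtain pre x y y' z post where xs: "zs = pre @ x # y # z # post" and ys: "zs' = pre @ x # y' # z # post"
    and a: "adj H x y'" "adj H y' z"
    using assms(1) unfolding pstep_def by blast
  obtain a b c rest where zs: "xs = take (length pre) xs @ a # b # c # rest" and lr: "length rest = length post"
    using split3 assms(3) xs by metis
  have w: "adj G a b" "adj G b c" using assms(2) zs by (metis walk_append_iff walk_Cons2)+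
  have lp: "length (take (length pre) xs) = length pre" using assms(3) xs by simp
  have e1: "zip xs zs = zip (take (length pre) xs) pre @ (a, x) # (b, y) # (c, z) # zip rest post"
    using lp xs by (subst zs) (simp)
  have e2: "zip xs zs' = zip (take (length pre) xs) pre @ (a, x) # (b, y') # (c, z) # zip rest post"
    using lp ys by (subst zs) (simp)
  have "adj (direct_product G H) (a, x) (b, y')" "adj (direct_product G H) (b, y') (c, z)"
    using a w assms(4,5) unfolding memg_def by (auto simp: adj_dp)
  then show ?thesis unfolding pstep_def e1 e2 by blast
qed

lemma zip_pstepr1:
  assumes "(pstep G)\<^sup>*\<^sup>* xs ys" "walk G xs" "walk H zs" "length zs = length xs" "memg G" "memg H"
  shows "(pstep (direct_product G H))\<^sup>*\<^sup>* (zip xs zs) (zip ys zs)"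
  using assms(1)
proof (induction rule: rtranclp_induct)
  case base then show ?case by simp
next
  case (step y z)
  have "walk G y" using pstepr_walk step(1) assms(2) by blast
  moreover have "length y = length xs" using pstepr_len step(1) by blast
  ultimately have "pstep (direct_product G H) (zip y zs) (zip z zs)"
    using zip_pstep1[OF step(2) assms(3)] assms by simp
  then show ?case using step(3) by (meson rtranclp.rtrancl_into_rtrancl)
qed

lemma zip_pstepr2:
  assumes "(pstep H)\<^sup>*\<^sup>* zs zs'" "walk G xs" "walk H zs" "length zs = length xs" "memg G" "memg H"
  shows "(pstep (direct_product G H))\<^sup>*\<^sup>* (zip xs zs) (zip xs zs')"
  using assms(1)
proof (induction rule: rtranclp_induct)
  case base then show ?case by simp
next
  case (step y z)
  have "length y = length zs" using pstepr_len step(1) by blast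
  then have "pstep (direct_product G H) (zip xs y) (zip xs z)"
    using zip_pstep2[OF step(2) assms(2)] assms by simp
  then show ?case using step(3) by (meson rtranclp.rtrancl_into_rtrancl)
qed

lemma product_not_cover:
  assumes mG: "memg G" and mH: "memg H"
    and sG: "\<And>a b. adj G a b \<Longrightarrow> adj G b a" and sH: "\<And>a b. adj H a b \<Longrightarrow> adj H b a"
    and wP: "walk G P" and wQ: "walk H Q" and len: "length P = length Q" and ne: "P \<noteq> []"
    and ev: "even (length P)"
    and hP: "(pstep G)\<^sup>*\<^sup>* P (rev P)" and hQ: "(pstep H)\<^sup>*\<^sup>* Q (rev Q)"
  shows "\<not> is_cover_graph (direct_product G H)"
proof
  assume c: "is_cover_graph (direct_product G H)"
  have wrP: "walk G (rev P)" using wP sG by (auto simp: walk_def successively_rev intro: successively_mono)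
  have h1: "(pstep (direct_product G H))\<^sup>*\<^sup>* (zip P Q) (zip (rev P) Q)"
    using zip_pstepr1[OF hP wP wQ] len mG mH by simp
  have h2: "(pstep (direct_product G H))\<^sup>*\<^sup>* (zip (rev P) Q) (zip (rev P) (rev Q))"
    using zip_pstepr2[OF hQ wrP wQ] len mG mH by simp
  have "zip (rev P) (rev Q) = rev (zip P Q)" using len by (simp add: zip_rev)
  then have h: "(pstep (direct_product G H))\<^sup>*\<^sup>* (zip P Q) (rev (zip P Q))" using h1 h2 by simp
  have w: "walk (direct_product G H) (zip P Q)" using walk_zip[OF mG mH wP wQ len] .
  have nz: "zip P Q \<noteq> []" using ne len by (cases P; cases Q) auto
  have ez: "even (length (zip P Q))" using ev len by simp
  show False
    using cover_no_rev[OF c _ w nz ez h] memg_dp[of G H] unfolding memg_def by blast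
qed



lemma pstepI: "adj G x y' \<Longrightarrow> adj G y' z \<Longrightarrow> pstep G (pre @ x # y # z # post) (pre @ x # y' # z # post)"
  unfolding pstep_def by blast

definition vx :: "nat \<Rightarrow> nat \<Rightarrow> nat \<Rightarrow> (nat \<times> nat) option" where
  "vx p i j = Some (i, j mod p)"

definition up :: "nat \<Rightarrow> nat \<Rightarrow> nat \<Rightarrow> nat \<Rightarrow> (nat \<times> nat) option list" where
  "up m p i j = map (\<lambda>t. Some (t, (j + (t - i)) mod p)) [i..<Suc m] @ [None]"

definition bend :: "nat \<Rightarrow> nat \<Rightarrow> nat \<Rightarrow> nat \<Rightarrow> (nat \<times> nat) option list" where
  "bend m p i j = vx p i j # up m p (Suc i) (j + p - 1)"

lemma up_step: assumes "i < m" shows "up m p i j = vx p i j # up m p (Suc i) (Suc j)"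
proof -
  have e: "\<And>x. Suc i \<le> x \<Longrightarrow> j + x - i = Suc (j + x - Suc i)" by arith
  show ?thesis unfolding up_def vx_def using assms
    by (simp add: upt_conv_Cons e)
qed

lemma up_top: "up m p m j = [vx p m j, None]"
  unfolding up_def vx_def by simp

lemma up_Cons: assumes "i \<le> m" shows "\<exists>R. up m p i j = vx p i j # R"
proof (cases "i < m")
  case True then show ?thesis using up_step by blast
next
  case False then have "i = m" using assms by simp
  then show ?thesis using up_top by blast
qed

lemma up_mod: assumes "j mod p = j' mod p" shows "up m p i j = up m p i j'"
proof -
  have "\<And>t. (j + (t - i)) mod p = (j' + (t - i)) mod p"
    using assms by (metis mod_add_cong)
  then show ?thesis unfolding up_def by simp
qed

lemma cadj_cycle: "0 < p \<Longrightarrow> b mod p = Suc a mod p \<or> a mod p = Suc b mod p \<Longrightarrow>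
    adj (cycle_graph p) (a mod p) (b mod p)"
  unfolding cycle_graph_def adj_def by (auto simp: mod_Suc_eq)

locale myc =
  fixes m p :: nat
  assumes m0: "0 < m" and p0: "0 < p"
begin

abbreviation "G \<equiv> mycielskian m (cycle_graph p)"

abbreviation "cadj a b \<equiv> (b mod p = Suc a mod p \<or> a mod p = Suc b mod p)"

lemma adjG: "adj G = myc_adj m (cycle_graph p)"
  by (simp add: mycielskian_def adj_def)

lemma vC: "verts (cycle_graph p) = {0..<p}"
  by (simp add: cycle_graph_def verts_def)

lemma A1: "i < m \<Longrightarrow> cadj a b \<Longrightarrow> adj G (vx p i a) (vx p (Suc i) b)"
  using cadj_cycle[OF p0, of b a] p0 unfolding adjG vx_def myc_adj_def vC by auto

lemma A1': "i < m \<Longrightarrow> cadj a b \<Longrightarrow> adj G (vx p (Suc i) b) (vx p i a)"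
  using cadj_cycle[OF p0, of a b] p0 unfolding adjG vx_def myc_adj_def vC by auto

lemma A0: "cadj a b \<Longrightarrow> adj G (vx p 0 a) (vx p 0 b)"
  using cadj_cycle[OF p0, of b a] p0 unfolding adjG vx_def myc_adj_def vC by auto

lemma A1s: "i < m \<Longrightarrow> adj G (vx p i a) (vx p (Suc i) (Suc a))"
    "i < m \<Longrightarrow> adj G (vx p i (Suc a)) (vx p (Suc i) a)"
    "i < m \<Longrightarrow> adj G (vx p (Suc i) (Suc a)) (vx p i a)"
    "i < m \<Longrightarrow> adj G (vx p (Suc i) a) (vx p i (Suc a))"
  using A1[where i=i and a=a and b="Suc a"] A1[where i=i and a="Suc a" and b=a]
    A1'[where i=i and a=a and b="Suc a"] A1'[where i=i and a="Suc a" and b=a] by auto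

lemma A0s: "adj G (vx p 0 a) (vx p 0 (Suc a))" "adj G (vx p 0 (Suc a)) (vx p 0 a)"
  using A0[where a=a and b="Suc a"] A0[where a="Suc a" and b=a] by auto

lemma vx_p: "vx p i (j + p) = vx p i j"
  by (simp add: vx_def)

lemma Au: "adj G (vx p m a) None" "adj G None (vx p m a)"
  using p0 unfolding adjG vx_def myc_adj_def vC by auto

lemma symC: "adj (cycle_graph p) a b \<Longrightarrow> adj (cycle_graph p) b a"
  unfolding cycle_graph_def adj_def by auto

lemma symG: "adj G x y \<Longrightarrow> adj G y x"
proof (cases x; cases y)
  fix a b assume "x = Some a" "y = Some b" "adj G x y"
  then show ?thesis using symC unfolding adjG myc_adj_def
    by (cases a; cases b) auto
qed (auto simp: adjG myc_adj_def split: prod.splits)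

lemma vG: "verts G = insert None (Some ` ({0..m} \<times> {0..<p}))"
  using vC by (simp add: mycielskian_def verts_def)

lemma memgG: "memg G"
  unfolding memg_def
proof (intro allI impI)
  fix x y assume a: "adj G x y"
  show "x \<in> verts G \<and> y \<in> verts G"
  proof (cases x; cases y)
    fix c d assume "x = Some c" "y = Some d"
    then show ?thesis using a unfolding adjG myc_adj_def vG vC
      by (cases c; cases d) auto
  qed (use a in \<open>auto simp: adjG myc_adj_def vG vC split: prod.splits\<close>)
qed

end



context myc begin

lemma mod_shift: "x = y + p \<Longrightarrow> x mod p = y mod p"
  by simp

lemma modp: "(a + p) mod p = a mod p" "Suc (a + p) mod p = Suc a mod p"
  by (simp_all add: add_Suc[symmetric] del: add_Suc)

lemma walk_up: "i \<le> m \<Longrightarrow> walk G (up m p i j)"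
proof (induction "m - i" arbitrary: i j rule: less_induct)
  case less
  show ?case
  proof (cases "i < m")
    case True
    obtain R where R: "up m p (Suc i) (Suc j) = vx p (Suc i) (Suc j) # R"
      using up_Cons[of "Suc i" m p "Suc j"] True by auto
    have w: "walk G (up m p (Suc i) (Suc j))" using less True by simp
    have "adj G (vx p i j) (vx p (Suc i) (Suc j))" using A1 True by simp
    then show ?thesis using w R up_step[OF True, of p j] by (simp add: walk_Cons2)
  next
    case False
    then have "i = m" using less by simp
    then show ?thesis using Au by (simp add: up_top walk_Cons2 walk_def)
  qed
qed

lemma fan: "i < m \<Longrightarrow> (pstep G)\<^sup>*\<^sup>* (bend m p i j) (up m p i j)"
proof (induction "m - i" arbitrary: i j rule: less_induct)
  case less
  show ?case
  proof (cases "Suc i = m")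
    case True
    have b: "bend m p i j = [] @ vx p i j # vx p m (j + p - 1) # None # []"
      unfolding bend_def using True up_top by simp
    have u: "up m p i j = [] @ vx p i j # vx p m (Suc j) # None # []"
      using up_step[OF less(2)] True up_top by simp
    have "pstep G (bend m p i j) (up m p i j)"
      unfolding b u apply (rule pstepI)
      using A1s(1)[of i j] True Au by auto
    then show ?thesis by blast
  next
    case False
    then have i2: "Suc i < m" using less by simp
    obtain R where R: "up m p (Suc (Suc i)) (j + p) = vx p (Suc (Suc i)) (j + p) # R"
      using up_Cons[of "Suc (Suc i)" m p "j + p"] i2 by auto
    have "bend m p i j = vx p i j # up m p (Suc i) (j + p - 1)" unfolding bend_def ..
    also have "\<dots> = vx p i j # vx p (Suc i) (j + p - 1) # up m p (Suc (Suc i)) (j + p)"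
      using up_step[OF i2, of p "j + p - 1"] p0 by simp
    also have "\<dots> = [] @ vx p i j # vx p (Suc i) (j + p - 1) # vx p (Suc (Suc i)) (j + p) # R"
      using R by simp
    finally have b: "bend m p i j = [] @ vx p i j # vx p (Suc i) (j + p - 1) # vx p (Suc (Suc i)) (j + p) # R" .
    have st: "pstep G (bend m p i j) ([] @ vx p i j # vx p (Suc i) (Suc j) # vx p (Suc (Suc i)) (j + p) # R)"
      unfolding b apply (rule pstepI)
      using A1s(1)[of i j] A1s(2)[of "Suc i" j] i2 vx_p by auto
    have e: "[] @ vx p i j # vx p (Suc i) (Suc j) # vx p (Suc (Suc i)) (j + p) # R = vx p i j # bend m p (Suc i) (Suc j)"
      unfolding bend_def using R by simp
    have ih: "(pstep G)\<^sup>*\<^sup>* (bend m p (Suc i) (Suc j)) (up m p (Suc i) (Suc j))"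
      using less i2 by simp
    have "(pstep G)\<^sup>*\<^sup>* (vx p i j # bend m p (Suc i) (Suc j)) (vx p i j # up m p (Suc i) (Suc j))"
      using pstepr_Cons[OF ih] .
    then show ?thesis using st e up_step[OF less(2), of p j]
      by (metis converse_rtranclp_into_rtranclp)
  qed
qed

definition M :: "nat \<Rightarrow> (nat \<times> nat) option list" where
  "M k = rev (up m p 0 k) @ up m p 0 (Suc k)"

lemma M_step: "(pstep G)\<^sup>*\<^sup>* (M k) (M (k + 2))"
proof -
  obtain R1 where R1: "up m p 1 (Suc k) = vx p 1 (Suc k) # R1"
    using up_Cons[of 1 m p "Suc k"] m0 by auto
  obtain R2 where R2: "up m p 1 (k + 2) = vx p 1 (k + 2) # R2"
    using up_Cons[of 1 m p "k + 2"] m0 by auto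
  have u0: "up m p 0 k = vx p 0 k # up m p 1 (Suc k)" using up_step[OF m0] by simp
  have u1: "up m p 0 (Suc k) = vx p 0 (Suc k) # up m p 1 (k + 2)" using up_step[OF m0] by simp
  have Mk: "M k = rev R1 @ vx p 1 (Suc k) # vx p 0 k # vx p 0 (Suc k) # (vx p 1 (k + 2) # R2)"
    unfolding M_def u0 u1 R1 R2 by simp
  have s1: "pstep G (M k) (rev R1 @ vx p 1 (Suc k) # vx p 0 (k + 2) # vx p 0 (Suc k) # (vx p 1 (k + 2) # R2))"
    unfolding Mk apply (rule pstepI)
    using A1s(4)[of 0 "Suc k"] A0s(2)[of "Suc k"] m0 by (auto simp: eval_nat_numeral)
  have s2: "pstep G ((rev R1 @ [vx p 1 (Suc k)]) @ vx p 0 (k + 2) # vx p 0 (Suc k) # vx p 1 (k + 2) # R2)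
                    ((rev R1 @ [vx p 1 (Suc k)]) @ vx p 0 (k + 2) # vx p 0 (k + 3) # vx p 1 (k + 2) # R2)"
    apply (rule pstepI)
    using A0s(1)[of "Suc (Suc k)"] A1s(2)[of 0 "Suc (Suc k)"] m0 by (auto simp: eval_nat_numeral)
  have b2: "bend m p 0 (k + 2) = vx p 0 (k + 2) # vx p 1 (Suc k) # R1"
  proof -
    have "up m p 1 (k + 2 + p - 1) = up m p 1 (Suc k)" by (rule up_mod, rule mod_shift) (use p0 in arith)
    then show ?thesis unfolding bend_def using R1 by simp
  qed
  have b3: "bend m p 0 (k + 3) = vx p 0 (k + 3) # vx p 1 (k + 2) # R2"
  proof -
    have "up m p 1 (k + 3 + p - 1) = up m p 1 (k + 2)" by (rule up_mod, rule mod_shift) (use p0 in arith)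
    then show ?thesis unfolding bend_def using R2 by simp
  qed
  have e: "(rev R1 @ [vx p 1 (Suc k)]) @ vx p 0 (k + 2) # vx p 0 (k + 3) # vx p 1 (k + 2) # R2
       = rev (bend m p 0 (k + 2)) @ bend m p 0 (k + 3)"
    unfolding b2 b3 by simp
  have h1: "(pstep G)\<^sup>*\<^sup>* (M k) (rev (bend m p 0 (k + 2)) @ bend m p 0 (k + 3))"
    using s1 s2 e by (metis (no_types, lifting) append.assoc append_Cons append_Nil r_into_rtranclp rtranclp.rtrancl_into_rtrancl)
  have h2: "(pstep G)\<^sup>*\<^sup>* (rev (bend m p 0 (k + 2)) @ bend m p 0 (k + 3)) (rev (up m p 0 (k + 2)) @ bend m p 0 (k + 3))"
    using pstepr_app1[OF pstepr_rev[OF symG fan[OF m0]]] by blast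
  have h3: "(pstep G)\<^sup>*\<^sup>* (rev (up m p 0 (k + 2)) @ bend m p 0 (k + 3)) (rev (up m p 0 (k + 2)) @ up m p 0 (k + 3))"
    using pstepr_app2[OF fan[OF m0]] by blast
  have "Suc (k + 2) = k + 3" by simp
  then have "M (k + 2) = rev (up m p 0 (k + 2)) @ up m p 0 (k + 3)" unfolding M_def by metis
  then show ?thesis using h1 h2 h3 by (metis rtranclp_trans)
qed

lemma M_iter: "(pstep G)\<^sup>*\<^sup>* (M 0) (M (2 * t))"
proof (induction t)
  case (Suc t) then show ?case using M_step[of "2 * t"] by (simp add: rtranclp_trans)
qed simp

lemma M_final: "(pstep G)\<^sup>*\<^sup>* (rev (M 0)) (M 1)"
proof -
  obtain R where R: "up m p 1 1 = vx p 1 1 # R" using up_Cons[of 1 m p 1] m0 by auto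
  have u0: "up m p 0 0 = vx p 0 0 # up m p 1 1" using up_step[OF m0] by simp
  have u1: "up m p 0 1 = vx p 0 1 # up m p 1 2" using up_step[OF m0, of p 1] by (metis One_nat_def Suc_1)
  have e1: "rev (M 0) = rev (up m p 1 2) @ vx p 0 1 # vx p 0 0 # vx p 1 1 # R"
  proof -
    have M0: "M 0 = rev (up m p 0 0) @ up m p 0 1" unfolding M_def by simp
    show ?thesis unfolding M0 u0 u1 R by simp
  qed
  have s: "pstep G (rev (M 0)) (rev (up m p 1 2) @ vx p 0 1 # vx p 0 2 # vx p 1 1 # R)"
    unfolding e1 apply (rule pstepI)
    using A0s(1)[of 1] A1s(2)[of 0 1] m0 by (auto simp: eval_nat_numeral)
  have b: "bend m p 0 2 = vx p 0 2 # vx p 1 1 # R"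
  proof -
    have "up m p 1 (2 + p - 1) = up m p 1 1" by (rule up_mod, rule mod_shift) (use p0 in arith)
    then show ?thesis unfolding bend_def using R by simp
  qed
  have e2: "rev (up m p 1 2) @ vx p 0 1 # vx p 0 2 # vx p 1 1 # R = rev (up m p 0 1) @ bend m p 0 2"
  proof -
    have "rev (up m p 0 1) = rev (up m p 1 2) @ [vx p 0 1]" using u1 by simp
    then show ?thesis by (simp only: b) simp
  qed
  have h: "(pstep G)\<^sup>*\<^sup>* (rev (up m p 0 1) @ bend m p 0 2) (rev (up m p 0 1) @ up m p 0 2)"
    using pstepr_app2[OF fan[OF m0]] by blast
  have "M 1 = rev (up m p 0 1) @ up m p 0 2" unfolding M_def by (simp add: numeral_2_eq_2 del: One_nat_def)
  then show ?thesis using s e2 h by (metis converse_rtranclp_into_rtranclp)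
qed

lemma walk_M0: "walk G (M 0)"
proof -
  have w1: "walk G (rev (up m p 0 0))" using walk_up[of 0 0] symG
    by (auto simp: walk_def successively_rev intro: successively_mono)
  have w2: "walk G (up m p 0 1)" using walk_up by simp
  have "adj G (vx p 0 0) (vx p 0 1)" using A0s(1)[of 0] by simp
  moreover have "last (rev (up m p 0 0)) = vx p 0 0" using up_step[OF m0, of p 0] by simp
  moreover have "hd (up m p 0 1) = vx p 0 1" using up_step[OF m0, of p 1] by simp
  ultimately show ?thesis unfolding M_def using w1 w2
    by (simp add: walk_append_iff)
qed

lemma M_len: "length (M k) = 2 * m + 4"
  unfolding M_def up_def by simp

lemma M0_rev:
  assumes "p = 2 * s + 1"
  shows "(pstep G)\<^sup>*\<^sup>* (M 0) (rev (M 0))"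
proof -
  have "M (2 * (s + 1)) = M 1"
  proof -
    have e: "2 * (s + 1) = 1 + p" "Suc (2 * (s + 1)) = Suc (1 + p)" using assms by simp_all
    have "up m p 0 (2 * (s + 1)) = up m p 0 1" by (rule up_mod) (simp only: e modp)
    moreover have "up m p 0 (Suc (2 * (s + 1))) = up m p 0 (Suc 1)" by (rule up_mod) (simp only: e modp)
    ultimately show ?thesis unfolding M_def by simp
  qed
  then have h1: "(pstep G)\<^sup>*\<^sup>* (M 0) (M 1)" using M_iter[of "s + 1"] by simp
  have "walk G (rev (M 0))" using walk_M0 symG
    by (auto simp: walk_def successively_rev intro: successively_mono)
  then have "(pstep G)\<^sup>*\<^sup>* (M 1) (rev (M 0))" using pstepr_sym[OF M_final] by blast
  then show ?thesis using h1 by (metis rtranclp_trans)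
qed

end



fun zz :: "nat \<Rightarrow> nat \<Rightarrow> nat \<Rightarrow> (nat \<times> nat) option list" where
  "zz m p 0 = []"
| "zz m p (Suc d) = (if even d then vx p m 0 else None) # zz m p d"

context myc begin

lemma zz_len: "length (zz m p d) = d"
  by (induction d) auto

lemma zz_last: "0 < d \<Longrightarrow> last (zz m p d) = vx p m 0"
proof (induction d)
  case (Suc d) then show ?case by (cases d) auto
qed simp

lemma zz_walk: "walk G (zz m p d)"
proof (induction d)
  case 0 then show ?case by (simp add: walk_def)
next
  case (Suc d)
  show ?case
  proof (cases d)
    case 0 then show ?thesis by (simp add: walk_def)
  next
    case (Suc d')
    then show ?thesis using Suc.IH Au by (auto simp: walk_Cons2)
  qed
qed

lemma last_up: "last (up m p i j) = None"
  unfolding up_def by simp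

lemma padded:
  assumes "p = 2 * s + 1"
  shows "\<exists>P. walk G P \<and> length P = 2 * d + 2 * m + 4 \<and> (pstep G)\<^sup>*\<^sup>* P (rev P)"
proof -
  define P where "P = zz m p d @ M 0 @ rev (zz m p d)"
  have neu: "up m p 0 0 \<noteq> []" by (simp add: up_def)
  have hM: "hd (M 0) = None" unfolding M_def using neu
    by (simp add: hd_append hd_rev last_up)
  have neu1: "up m p 0 (Suc 0) \<noteq> []" by (simp add: up_def)
  have lM: "last (M 0) = None" unfolding M_def using neu1
    by (simp add: last_up)
  have wr: "walk G (rev (zz m p d))" using zz_walk symG
    by (auto simp: walk_def successively_rev intro: successively_mono)
  have zl: "zz m p d \<noteq> [] \<Longrightarrow> last (zz m p d) = vx p m 0"
    using zz_last[of d] zz_len[of d] by (cases d) auto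
  have "M 0 \<noteq> []" using M_len[of 0] by auto
  then have w: "walk G P"
  proof (cases "zz m p d = []")
    case True then show ?thesis unfolding P_def using walk_M0 by simp
  next
    case False
    then have "last (zz m p d) = vx p m 0" using zl by blast
    then show ?thesis unfolding P_def using False \<open>M 0 \<noteq> []\<close> zz_walk walk_M0 wr hM lM Au
      by (auto simp: walk_append_iff hd_rev)
  qed
  have l: "length P = 2 * d + 2 * m + 4" unfolding P_def using zz_len M_len by simp
  have "(pstep G)\<^sup>*\<^sup>* P (zz m p d @ rev (M 0) @ rev (zz m p d))"
    unfolding P_def by (rule pstepr_ctx[OF M0_rev[OF assms]])
  then have "(pstep G)\<^sup>*\<^sup>* P (rev P)" unfolding P_def by simp
  then show ?thesis using w l by blast
qed

end

theorem theorem12: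
  fixes m n s t :: nat
  assumes "m > 0" and "n > 0" and "s > 0" and "t > 0"
  shows "\<not> is_cover_graph
           (direct_product (mycielskian m (cycle_graph (2 * s + 1)))
                           (mycielskian n (cycle_graph (2 * t + 1))))"
proof -
  interpret g1: myc m "2 * s + 1" using assms by unfold_locales auto
  interpret g2: myc n "2 * t + 1" using assms by unfold_locales auto
  define K where "K = max m n"
  obtain P where P: "walk (mycielskian m (cycle_graph (2 * s + 1))) P"
      "length P = 2 * (K - m) + 2 * m + 4"
      "(pstep (mycielskian m (cycle_graph (2 * s + 1))))\<^sup>*\<^sup>* P (rev P)"
    using g1.padded[of s "K - m"] by auto
  obtain Q where Q: "walk (mycielskian n (cycle_graph (2 * t + 1))) Q"
      "length Q = 2 * (K - n) + 2 * n + 4"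
      "(pstep (mycielskian n (cycle_graph (2 * t + 1))))\<^sup>*\<^sup>* Q (rev Q)"
    using g2.padded[of t "K - n"] by auto
  have len: "length P = length Q" using P(2) Q(2) unfolding K_def by simp
  have ne: "P \<noteq> []" using P(2) by auto
  have ev: "even (length P)" using P(2) by simp
  show ?thesis
    by (rule product_not_cover[OF g1.memgG g2.memgG g1.symG g2.symG P(1) Q(1) len ne ev P(3) Q(3)])
qed


end
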